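(* Let $M$ be a matroid, $\mathcal{T}$ a tangle of $M$ of order $\theta$, and $N$ a minor of $M$ with $E(M)\setminus E(N) = \{e\}$. Let $\mathcal{T}'$ be the tangle of $N$ inherited from $\mathcal{T}$, and let $Z\subseteq E(N)$. \begin{enumerate} \item $r_{\mathcal{T}}(Z) - 1 \leq r_{\mathcal{T}'}(Z) \leq r_\mathcal{T}(Z)$; \item If $e\not\in \mathrm{cl}_\mathcal{T}(Z)$ and $r_\mathcal{T}(Z) < \theta$ then $r_{\mathcal{T}'}(Z) = r_{\mathcal{T}}(Z)$. \end{enumerate}
   Context: The connectivity function is $\lambda_M(X)=r_M(X)+r_M(E(M)\setminus X)-r(M)$. A tangle of order $\theta$ of $M$ is a collection $\mathcal{T}$ of subsets of $E(M)$ such that: every $X\in\mathcal{T}$ has $\lambda_M(X)<\theta$; for every $X$ with $\lambda_M(X)<\theta$, either $X\in\mathcal{T}$ or $E(M)\setminus X\in\mathcal{T}$; no three members of $\mathcal{T}$ cover $E(M)$; and $E(M)\setminus\{e\}\notin\mathcal{T}$ for each $e\in E(M)$. The tangle matroid $M(\mathcal{T})$ has rank function $r_\mathcal{T}(X)=\min\{\lambda_M(Y): X\subseteq Y\in\mathcal{T}\}$ if such $Y$ exists, and $\theta$ otherwise; $\mathrm{cl}_\mathcal{T}$ denotes the closure operator of $M(\mathcal{T})$. For a minor $N$ with $E(M)\setminus E(N)=S$, the tangle of $N$ inherited from $\mathcal{T}$ is $\mathcal{T}'=\{X\setminus S: X\in\mathcal{T},\ \lambda_N(X)<\theta-|S|\}$,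 a tangle of $N$ of order $\theta-|S|$; $r_{\mathcal{T}'}$ is the rank function of $N(\mathcal{T}')$. *)

theory Defs
  imports Main
begin

text \<open>A matroid is given by a finite ground set E and a rank function r
  (only its values on subsets of E matter), satisfying the rank axioms.\<close>
definition matroid :: "'a set \<Rightarrow> ('a set \<Rightarrow> nat) \<Rightarrow> bool" where
  "matroid E r \<longleftrightarrow> finite E \<and>
     (\<forall>X\<subseteq>E. r X \<le> card X) \<and>
     (\<forall>X Y. X \<subseteq> Y \<and> Y \<subseteq> E \<longrightarrow> r X \<le> r Y) \<and>
     (\<forall>X Y. X \<subseteq> E \<and> Y \<subseteq> E \<longrightarrow> r (X \<union> Y) + r (X \<inter> Y) \<le> r X + r Y)"

definition conn :: "'a set \<Rightarrow> ('a set \<Rightarrow> nat) \<Rightarrow> 'a set \<Rightarrow> int" where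
  "conn E r X = int (r X) + int (r (E - X)) - int (r E)"

definition tangle :: "'a set \<Rightarrow> ('a set \<Rightarrow> nat) \<Rightarrow> nat \<Rightarrow> 'a set set \<Rightarrow> bool" where
  "tangle E r \<theta> T \<longleftrightarrow>
     (\<forall>X\<in>T. X \<subseteq> E \<and> conn E r X < int \<theta>) \<and>
     (\<forall>X. X \<subseteq> E \<and> conn E r X < int \<theta> \<longrightarrow> X \<in> T \<or> E - X \<in> T) \<and>
     (\<forall>A\<in>T. \<forall>B\<in>T. \<forall>C\<in>T. A \<union> B \<union> C \<noteq> E) \<and>
     (\<forall>e\<in>E. E - {e} \<notin> T)"

definition tangle_rank :: "'a set \<Rightarrow> ('a set \<Rightarrow> nat) \<Rightarrow> nat \<Rightarrow> 'a set set \<Rightarrow> 'a set \<Rightarrow> int" where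
  "tangle_rank E r \<theta> T X =
     (if \<exists>Y\<in>T. X \<subseteq> Y then Min {conn E r Y | Y. Y \<in> T \<and> X \<subseteq> Y} else int \<theta>)"

definition tangle_cl :: "'a set \<Rightarrow> ('a set \<Rightarrow> nat) \<Rightarrow> nat \<Rightarrow> 'a set set \<Rightarrow> 'a set \<Rightarrow> 'a set" where
  "tangle_cl E r \<theta> T X = {x\<in>E. tangle_rank E r \<theta> T (insert x X) = tangle_rank E r \<theta> T X}"

definition delete_rank :: "('a set \<Rightarrow> nat) \<Rightarrow> 'a \<Rightarrow> 'a set \<Rightarrow> nat" where
  "delete_rank r e X = r X"

definition contract_rank :: "('a set \<Rightarrow> nat) \<Rightarrow> 'a \<Rightarrow> 'a set \<Rightarrow> nat" where
  "contract_rank r e X = r (insert e X) - r {e}"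

definition single_minor :: "'a set \<Rightarrow> ('a set \<Rightarrow> nat) \<Rightarrow> 'a \<Rightarrow> ('a set \<Rightarrow> nat) \<Rightarrow> bool" where
  "single_minor E r e rN \<longleftrightarrow> e \<in> E \<and>
     ((\<forall>X\<subseteq>E - {e}. rN X = delete_rank r e X) \<or> (\<forall>X\<subseteq>E - {e}. rN X = contract_rank r e X))"

definition inherited_tangle :: "'a set \<Rightarrow> ('a set \<Rightarrow> nat) \<Rightarrow> nat \<Rightarrow> 'a set set \<Rightarrow> 'a set \<Rightarrow> ('a set \<Rightarrow> nat) \<Rightarrow> 'a set set" where
  "inherited_tangle E r \<theta> T S rN =
     {X - S | X. X \<in> T \<and> conn (E - S) rN (X - S) < int \<theta> - int (card S)}"

end

theory Submission
  imports Defs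
begin

lemma m_mono: "matroid E r \<Longrightarrow> X \<subseteq> Y \<Longrightarrow> Y \<subseteq> E \<Longrightarrow> r X \<le> r Y"
  unfolding matroid_def by blast
lemma m_sub: "matroid E r \<Longrightarrow> X \<subseteq> E \<Longrightarrow> Y \<subseteq> E \<Longrightarrow> r (X \<union> Y) + r (X \<inter> Y) \<le> r X + r Y"
  unfolding matroid_def by blast
lemma m_card: "matroid E r \<Longrightarrow> X \<subseteq> E \<Longrightarrow> r X \<le> card X"
  unfolding matroid_def by blast
lemma m_fin: "matroid E r \<Longrightarrow> finite E"
  unfolding matroid_def by blast

lemma conn_nonneg: assumes "matroid E r" "X \<subseteq> E" shows "conn E r X \<ge> 0"
proof -
  have "r (X \<union> (E - X)) + r (X \<inter> (E - X)) \<le> r X + r (E - X)"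
    using m_sub[OF assms(1) assms(2), of "E - X"] by blast
  moreover have "X \<union> (E - X) = E" using assms(2) by blast
  ultimately show ?thesis unfolding conn_def by simp
qed

lemma r_single: assumes "matroid E r" "e \<in> E" shows "r {e} \<le> 1"
  using m_card[OF assms(1), of "{e}"] assms(2) by simp

lemma minor_conn:
  assumes M: "matroid E r" and S: "single_minor E r e rN" and Y: "Y \<subseteq> E - {e}"
  shows "conn (E - {e}) rN Y \<le> conn E r Y \<and> conn (E - {e}) rN Y \<le> conn E r (insert e Y)
    \<and> conn E r Y \<le> conn (E - {e}) rN Y + 1 \<and> conn E r (insert e Y) \<le> conn (E - {e}) rN Y + 1
    \<and> conn (E - {e}) rN Y \<ge> 0"
proof -
  have e: "e \<in> E" using S unfolding single_minor_def by blast
  have Y1: "Y \<subseteq> E" "e \<notin> Y" using Y by auto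
  have re: "r {e} \<le> 1" using r_single[OF M e] .
  have s1: "r ((E - Y) \<union> (E - {e})) + r ((E - Y) \<inter> (E - {e})) \<le> r (E - Y) + r (E - {e})"
    using m_sub[OF M, of "E - Y" "E - {e}"] by blast
  have s2: "r ((insert e Y) \<union> (E - {e})) + r ((insert e Y) \<inter> (E - {e})) \<le> r (insert e Y) + r (E - {e})"
    using m_sub[OF M, of "insert e Y" "E - {e}"] e Y1 by blast
  have s3: "r (Y \<union> {e}) + r (Y \<inter> {e}) \<le> r Y + r {e}"
    using m_sub[OF M, of Y "{e}"] e Y1 by blast
  have s4: "r ((E - Y - {e}) \<union> {e}) + r ((E - Y - {e}) \<inter> {e}) \<le> r (E - Y - {e}) + r {e}"
    using m_sub[OF M, of "E - Y - {e}" "{e}"] e Y1 by blast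
  have s5: "r ((insert e Y) \<union> (E - Y)) + r ((insert e Y) \<inter> (E - Y)) \<le> r (insert e Y) + r (E - Y)"
    using m_sub[OF M, of "insert e Y" "E - Y"] e Y1 by blast
  have s6: "r (Y \<union> (E - Y)) + r (Y \<inter> (E - Y)) \<le> r Y + r (E - Y)"
    using m_sub[OF M, of Y "E - Y"] e Y1 by blast
  have s7: "r (Y \<union> (E - Y - {e})) + r (Y \<inter> (E - Y - {e})) \<le> r Y + r (E - Y - {e})"
    using m_sub[OF M, of Y "E - Y - {e}"] e Y1 by blast
  have eq7: "Y \<union> (E - Y - {e}) = E - {e}" "Y \<inter> (E - Y - {e}) = {}" using Y1 e by auto
  have r0: "r {} = 0" using m_card[OF M, of "{}"] by simp
  have mo1: "r Y \<le> r (insert e Y)" using m_mono[OF M, of Y "insert e Y"] e Y1 by blast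
  have mo2: "r (E - Y - {e}) \<le> r (E - Y)" using m_mono[OF M, of "E - Y - {e}" "E - Y"] by blast
  have mo3: "r (E - {e}) \<le> r E" using m_mono[OF M, of "E - {e}" E] by blast
  have mo4: "r {e} \<le> r (insert e Y)" using m_mono[OF M, of "{e}" "insert e Y"] e Y1 by blast
  have mo5: "r {e} \<le> r (E - Y)" using m_mono[OF M, of "{e}" "E - Y"] e Y1 by blast
  have mo6: "r {e} \<le> r E" using m_mono[OF M, of "{e}" "E"] e Y1 by blast
  have eq1: "(E - Y) \<union> (E - {e}) = E" "(E - Y) \<inter> (E - {e}) = E - Y - {e}"
    "(insert e Y) \<union> (E - {e}) = E" "(insert e Y) \<inter> (E - {e}) = Y" "Y \<union> {e} = insert e Y"
    "Y \<inter> {e} = {}" "(E - Y - {e}) \<union> {e} = E - Y" "(E - Y - {e}) \<inter> {e} = {}"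
    "(insert e Y) \<union> (E - Y) = E" "(insert e Y) \<inter> (E - Y) = {e}" "Y \<union> (E - Y) = E" "Y \<inter> (E - Y) = {}"
    "E - insert e Y = E - Y - {e}" "E - {e} - Y = E - Y - {e}"
    using e Y1 by auto
  note eqs = eq1
  from S have "(\<forall>X\<subseteq>E - {e}. rN X = r X) \<or> (\<forall>X\<subseteq>E - {e}. rN X = r (insert e X) - r {e})"
    unfolding single_minor_def delete_rank_def contract_rank_def by blast
  then show ?thesis
  proof
    assume D: "\<forall>X\<subseteq>E - {e}. rN X = r X"
    have a1: "rN Y = r Y" using D Y by blast
    have a2: "rN (E - Y - {e}) = r (E - Y - {e})" using D[rule_format, of "E - {e} - Y"] eq1(14) by auto
    have a3: "rN (E - {e}) = r (E - {e})" using D by blast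
    show ?thesis unfolding conn_def a1 a2 a3 eq1(13) eq1(14)
      using s1 s2 s3 s4 s5 s6 mo1 mo2 mo3 re r0 s7 unfolding eq1 eq7 by (intro conjI; linarith)
  next
    assume C: "\<forall>X\<subseteq>E - {e}. rN X = r (insert e X) - r {e}"
    have i1: "insert e (E - {e} - Y) = E - Y" "insert e (E - {e}) = E" using e Y1 by auto
    have a1: "rN Y = r (insert e Y) - r {e}" using C Y by blast
    have a2: "rN (E - Y - {e}) = r (E - Y) - r {e}" using C[rule_format, of "E - {e} - Y"] i1 eq1(14) by auto
    have a3: "rN (E - {e}) = r E - r {e}" using C[rule_format, of "E - {e}"] i1 by auto
    show ?thesis unfolding conn_def a1 a2 a3 eq1(13) eq1(14)
      using s1 s2 s3 s4 s5 s6 mo1 mo2 mo3 mo4 mo5 mo6 re r0 s7 unfolding eq1 eq7 by (intro conjI; linarith)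
  qed
qed

lemma tr_set: "{conn E r Y | Y. Y \<in> T \<and> Z \<subseteq> Y} = conn E r ` {Y \<in> T. Z \<subseteq> Y}" by blast

lemma tr_le: assumes "finite T" "Y \<in> T" "Z \<subseteq> Y" shows "tangle_rank E r \<theta> T Z \<le> conn E r Y"
  unfolding tangle_rank_def tr_set using assms by (auto intro!: Min_le)

lemma tr_cases: assumes "finite T"
  shows "(\<exists>Y\<in>T. Z \<subseteq> Y \<and> tangle_rank E r \<theta> T Z = conn E r Y)
       \<or> ((\<forall>Y\<in>T. \<not> Z \<subseteq> Y) \<and> tangle_rank E r \<theta> T Z = int \<theta>)"
proof (cases "\<exists>Y\<in>T. Z \<subseteq> Y")
  case True
  then have ne: "conn E r ` {Y \<in> T. Z \<subseteq> Y} \<noteq> {}" by blast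
  have "Min (conn E r ` {Y \<in> T. Z \<subseteq> Y}) \<in> conn E r ` {Y \<in> T. Z \<subseteq> Y}"
    using Min_in[OF _ ne] assms by auto
  then show ?thesis using True unfolding tangle_rank_def tr_set by auto
next
  case False then show ?thesis unfolding tangle_rank_def by auto
qed


theorem lemma2p31:
  fixes E :: "'a set" and r rN :: "'a set \<Rightarrow> nat" and \<theta> :: nat
    and T :: "'a set set" and e :: 'a and Z :: "'a set"
  assumes "matroid E r"
    and "tangle E r \<theta> T"
    and "single_minor E r e rN"
    and "Z \<subseteq> E - {e}"
  defines "T' \<equiv> inherited_tangle E r \<theta> T {e} rN"
  shows "(tangle_rank E r \<theta> T Z - 1 \<le> tangle_rank (E - {e}) rN (\<theta> - 1) T' Z
         \<and> tangle_rank (E - {e}) rN (\<theta> - 1) T' Z \<le> tangle_rank E r \<theta> T Z)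
         \<and> (e \<notin> tangle_cl E r \<theta> T Z \<and> tangle_rank E r \<theta> T Z < int \<theta>
         \<longrightarrow> tangle_rank (E - {e}) rN (\<theta> - 1) T' Z = tangle_rank E r \<theta> T Z)"
proof -
  note M = assms(1) and Tg = assms(2) and S = assms(3) and Z = assms(4)
  have e: "e \<in> E" using S unfolding single_minor_def by blast
  have finE: "finite E" using m_fin[OF M] .
  have tax2: "\<And>X. X \<subseteq> E \<Longrightarrow> conn E r X < int \<theta> \<Longrightarrow> X \<in> T \<or> E - X \<in> T"
    using Tg unfolding tangle_def by blast
  have tax3: "\<And>A B C. A \<in> T \<Longrightarrow> B \<in> T \<Longrightarrow> C \<in> T \<Longrightarrow> A \<union> B \<union> C \<noteq> E"
    using Tg unfolding tangle_def by blast
  have tax4: "E - {e} \<notin> T"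
    using Tg e unfolding tangle_def by blast
  have memT0: "\<forall>X\<in>T. X \<subseteq> E \<and> conn E r X < int \<theta>" using Tg unfolding tangle_def by (rule conjunct1)
  have memT: "\<And>X. X \<in> T \<Longrightarrow> X \<subseteq> E \<and> conn E r X < int \<theta>" using memT0 by blast
  have finT: "finite T"
    by (rule finite_subset[of T "Pow E"]) (use memT finE in auto)
  have T'eq: "T' = {X - {e} | X. X \<in> T \<and> conn (E - {e}) rN (X - {e}) < int \<theta> - 1}"
    unfolding T'_def inherited_tangle_def by simp
  have finT': "finite T'"
    by (rule finite_subset[of T' "(\<lambda>X. X - {e}) ` T"]) (use finT T'eq in auto)
  define RT where "RT = tangle_rank E r \<theta> T"
  define RT' where "RT' = tangle_rank (E - {e}) rN (\<theta> - 1) T'"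
  define N where "N = conn (E - {e}) rN"
  have mc: "\<And>Y. Y \<subseteq> E - {e} \<Longrightarrow> N Y \<le> conn E r Y \<and> N Y \<le> conn E r (insert e Y)
    \<and> conn E r Y \<le> N Y + 1 \<and> conn E r (insert e Y) \<le> N Y + 1 \<and> N Y \<ge> 0"
    unfolding N_def using minor_conn[OF M S] by blast
  have RTc: "\<And>W. (\<exists>Y\<in>T. W \<subseteq> Y \<and> RT W = conn E r Y) \<or> ((\<forall>Y\<in>T. \<not> W \<subseteq> Y) \<and> RT W = int \<theta>)"
    unfolding RT_def using tr_cases[OF finT] by blast
  have RTle: "\<And>W Y. Y \<in> T \<Longrightarrow> W \<subseteq> Y \<Longrightarrow> RT W \<le> conn E r Y"
    unfolding RT_def using tr_le[OF finT] by blast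
  have RT'c: "(\<exists>Y\<in>T'. Z \<subseteq> Y \<and> RT' Z = N Y) \<or> ((\<forall>Y\<in>T'. \<not> Z \<subseteq> Y) \<and> RT' Z = int (\<theta> - 1))"
    unfolding RT'_def N_def using tr_cases[OF finT'] by blast
  have RT'le: "\<And>Y. Y \<in> T' \<Longrightarrow> Z \<subseteq> Y \<Longrightarrow> RT' Z \<le> N Y"
    unfolding RT'_def N_def using tr_le[OF finT'] by blast
  have memT': "\<And>Y. Y \<in> T' \<Longrightarrow> \<exists>X\<in>T. Y = X - {e} \<and> N Y < int \<theta> - 1"
    unfolding T'eq N_def by blast
  have inT': "\<And>X. X \<in> T \<Longrightarrow> N (X - {e}) < int \<theta> - 1 \<Longrightarrow> X - {e} \<in> T'"
    unfolding T'eq N_def by blast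
  have RTbd: "\<And>W. 0 \<le> RT W \<and> RT W \<le> int \<theta>"
  proof -
    fix W show "0 \<le> RT W \<and> RT W \<le> int \<theta>"
      using RTc[of W] memT conn_nonneg[OF M] by fastforce
  qed
  have T'bd: "\<And>Y. Y \<in> T' \<Longrightarrow> 1 \<le> \<theta> \<and> N Y < int \<theta> - 1 \<and> Y \<subseteq> E - {e}"
  proof -
    fix Y assume "Y \<in> T'"
    then obtain X where X: "X \<in> T" "Y = X - {e}" "N Y < int \<theta> - 1" using memT' by blast
    have "Y \<subseteq> E - {e}" using memT[OF X(1)] X(2) by blast
    then have "N Y \<ge> 0" using mc by blast
    then show "1 \<le> \<theta> \<and> N Y < int \<theta> - 1 \<and> Y \<subseteq> E - {e}" using X \<open>Y \<subseteq> E - {e}\<close> by linarith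
  qed
  have up: "RT' Z \<le> RT Z"
    using RTc[of Z]
  proof
    assume "\<exists>Y\<in>T. Z \<subseteq> Y \<and> RT Z = conn E r Y"
    then obtain Y where Y: "Y \<in> T" "Z \<subseteq> Y" "RT Z = conn E r Y" by blast
    have YE: "Y \<subseteq> E" "conn E r Y < int \<theta>" using memT[OF Y(1)] by auto
    have Y'E: "Y - {e} \<subseteq> E - {e}" using YE by blast
    have cY: "N (Y - {e}) \<le> conn E r Y"
    proof (cases "e \<in> Y")
      case True then have "Y = insert e (Y - {e})" by blast
      then show ?thesis using mc[OF Y'E] by metis
    next
      case False then show ?thesis using mc[OF Y'E] by simp
    qed
    have "0 \<le> conn E r Y" using conn_nonneg[OF M YE(1)] .
    show ?thesis
    proof (cases "N (Y - {e}) < int \<theta> - 1")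
      case True
      then have "RT' Z \<le> N (Y - {e})" using RT'le[OF inT'[OF Y(1)]] Y(2) Z by blast
      then show ?thesis using cY Y(3) by linarith
    next
      case False
      show ?thesis using RT'c
      proof
        assume "\<exists>Y\<in>T'. Z \<subseteq> Y \<and> RT' Z = N Y"
        then show ?thesis using T'bd False cY Y(3) by fastforce
      next
        assume "(\<forall>Y\<in>T'. \<not> Z \<subseteq> Y) \<and> RT' Z = int (\<theta> - 1)"
        then show ?thesis using False cY Y(3) YE \<open>0 \<le> conn E r Y\<close> by linarith
      qed
    qed
  next
    assume "(\<forall>Y\<in>T. \<not> Z \<subseteq> Y) \<and> RT Z = int \<theta>"
    then show ?thesis using RT'c T'bd by fastforce
  qed
  have low: "RT Z - 1 \<le> RT' Z"
    using RT'c
  proof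
    assume "\<exists>Y\<in>T'. Z \<subseteq> Y \<and> RT' Z = N Y"
    then obtain Y where Y: "Y \<in> T'" "Z \<subseteq> Y" "RT' Z = N Y" by blast
    obtain X where X: "X \<in> T" "Y = X - {e}" using memT'[OF Y(1)] by blast
    have YE: "Y \<subseteq> E - {e}" using T'bd[OF Y(1)] by blast
    have "conn E r X \<le> N Y + 1"
    proof (cases "e \<in> X")
      case True then have "X = insert e Y" using X(2) by blast
      then show ?thesis using mc[OF YE] by metis
    next
      case False then show ?thesis using mc[OF YE] X(2) by simp
    qed
    moreover have "RT Z \<le> conn E r X" using RTle[OF X(1)] Y(2) X(2) by blast
    ultimately show ?thesis using Y(3) by linarith
  next
    assume "(\<forall>Y\<in>T'. \<not> Z \<subseteq> Y) \<and> RT' Z = int (\<theta> - 1)"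
    then show ?thesis using RTbd[of Z] by linarith
  qed
  have part2: "e \<notin> tangle_cl E r \<theta> T Z \<and> RT Z < int \<theta> \<longrightarrow> RT' Z = RT Z"
  proof
    assume H: "e \<notin> tangle_cl E r \<theta> T Z \<and> RT Z < int \<theta>"
    have ne0: "e \<notin> {x\<in>E. tangle_rank E r \<theta> T (insert x Z) = tangle_rank E r \<theta> T Z}"
      using H unfolding tangle_cl_def by (rule conjunct1)
    have ne: "RT (insert e Z) \<noteq> RT Z" using ne0 e unfolding RT_def by simp
    have mono: "RT Z \<le> RT (insert e Z)"
      using RTc[of "insert e Z"]
    proof
      assume "\<exists>Y\<in>T. insert e Z \<subseteq> Y \<and> RT (insert e Z) = conn E r Y"
      then obtain Y where "Y \<in> T" "insert e Z \<subseteq> Y" "RT (insert e Z) = conn E r Y" by blast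
      then show ?thesis using RTle[of Y Z] by simp
    next
      assume "(\<forall>Y\<in>T. \<not> insert e Z \<subseteq> Y) \<and> RT (insert e Z) = int \<theta>"
      then show ?thesis using RTbd[of Z] by simp
    qed
    have gt: "RT Z + 1 \<le> RT (insert e Z)" using ne mono by linarith
    have "RT Z \<le> RT' Z"
      using RT'c
    proof
      assume "\<exists>Y\<in>T'. Z \<subseteq> Y \<and> RT' Z = N Y"
      then obtain Y where Y: "Y \<in> T'" "Z \<subseteq> Y" "RT' Z = N Y" by blast
      obtain X where X: "X \<in> T" "Y = X - {e}" using memT'[OF Y(1)] by blast
      have YE: "Y \<subseteq> E - {e}" and th: "1 \<le> \<theta>" "N Y < int \<theta> - 1" using T'bd[OF Y(1)] by auto
      have key: "RT (insert e Z) \<le> N Y + 1"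
      proof (cases "e \<in> X")
        case True then have XY: "X = insert e Y" using X(2) by blast
        have "RT (insert e Z) \<le> conn E r X" using RTle[OF X(1)] Y(2) XY by blast
        then show ?thesis using mc[OF YE] XY by fastforce
      next
        case False
        then have XY: "X = Y" using X(2) by blast
        have c1: "conn E r (insert e Y) < int \<theta>" using mc[OF YE] th by linarith
        have sub: "insert e Y \<subseteq> E" using YE e by blast
        have "insert e Y \<in> T \<or> E - insert e Y \<in> T" using tax2 c1 sub by blast
        then show ?thesis
        proof
          assume "insert e Y \<in> T"
          then have "RT (insert e Z) \<le> conn E r (insert e Y)" using RTle Y(2) by blast
          then show ?thesis using mc[OF YE] by linarith
        next
          assume A: "E - insert e Y \<in> T"
          have "conn E r {e} \<le> 1"
          proof -
            have "r {e} \<le> 1" using r_single[OF M e] .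
            moreover have "r (E - {e}) \<le> r E" using m_mono[OF M, of "E - {e}" E] by blast
            ultimately show ?thesis unfolding conn_def by linarith
          qed
          then have "conn E r {e} < int \<theta>" using th mc[OF YE] by linarith
          then have B: "{e} \<in> T" using tax2[of "{e}"] tax4 e by blast
          have eqE: "Y \<union> (E - insert e Y) \<union> {e} = E" using YE e by blast
          have YT: "Y \<in> T" using X(1) XY by simp
          show ?thesis by (rule notE[OF tax3[OF YT A B] eqE])
        qed
      qed
      show ?thesis using key gt Y(3) by linarith
    next
      assume "(\<forall>Y\<in>T'. \<not> Z \<subseteq> Y) \<and> RT' Z = int (\<theta> - 1)"
      then show ?thesis using H RTbd[of Z] by linarith
    qed
    then show "RT' Z = RT Z" using up by linarith
  qed
  show ?thesis using up low part2 unfolding RT_def RT'_def by blast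
qed

end
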